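(* Let $(G,\prec)$ be a POP-graph. (1) For every $i\in I(G)$ and $e\in E(G)\setminus I(G)$: $i^-(e)\preceq i\preceq i^+(e)$ if and only if $i\to e$. (2) For every $o\in O(G)$ and $e\in E(G)\setminus O(G)$: $o^-(e)\preceq o\preceq o^+(e)$ if and only if $e\to o$.
   Context: A progressive graph is a finite directed acyclic graph (parallel edges allowed) in which every source and every sink has degree one; degree-one vertices are boundary vertices. $I(G)$ is the set of input edges (initial vertex a boundary vertex), $O(G)$ the set of output edges (terminal vertex a boundary vertex). For edges write $e\to e'$ if $e\neq e'$ and there is a directed path whose first edge is $e$ and last edge is $e'$. A planar order on $G$ is a linear order $\prec$ on $E(G)$ such that (P1) $e_1\to e_2$ implies $e_1\prec e_2$; (P2) if $e_1\prec e_2\prec e_3$ and $e_1\to e_3$ then $e_1\to e_2$ or $e_2\to e_3$. A POP-graph is a progressive graph with a planar order. For an edge $e$, $i^-(e)$ and $i^+(e)$ are the $\prec$-minimum and $\prec$-maximum of $\{i\in I(G): i\to e\}$, and $o^-(e)$, $o^+(e)$ are the $\prec$-minimum and $\prec$-maximum of $\{o\in O(G): e\to o\}$. *)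

theory Defs
  imports Main
begin

text \<open>A directed graph with parallel edges: vertex set V, edge set E,
  initial vertex map s and terminal vertex map t.\<close>

definition indeg :: "'e set \<Rightarrow> ('e \<Rightarrow> 'v) \<Rightarrow> 'v \<Rightarrow> nat" where
  "indeg E t v = card {e \<in> E. t e = v}"

definition outdeg :: "'e set \<Rightarrow> ('e \<Rightarrow> 'v) \<Rightarrow> 'v \<Rightarrow> nat" where
  "outdeg E s v = card {e \<in> E. s e = v}"

definition vdeg :: "'e set \<Rightarrow> ('e \<Rightarrow> 'v) \<Rightarrow> ('e \<Rightarrow> 'v) \<Rightarrow> 'v \<Rightarrow> nat" where
  "vdeg E s t v = indeg E t v + outdeg E s v"

definition progressive_graph ::
  "'v set \<Rightarrow> 'e set \<Rightarrow> ('e \<Rightarrow> 'v) \<Rightarrow> ('e \<Rightarrow> 'v) \<Rightarrow> bool" where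
  "progressive_graph V E s t \<longleftrightarrow>
     finite V \<and> finite E \<and> (\<forall>e\<in>E. s e \<in> V \<and> t e \<in> V) \<and>
     acyclic {(s e, t e) | e. e \<in> E} \<and>
     (\<forall>v\<in>V. (indeg E t v = 0 \<or> outdeg E s v = 0) \<longrightarrow> vdeg E s t v = 1)"

definition boundary :: "'v set \<Rightarrow> 'e set \<Rightarrow> ('e \<Rightarrow> 'v) \<Rightarrow> ('e \<Rightarrow> 'v) \<Rightarrow> 'v \<Rightarrow> bool" where
  "boundary V E s t v \<longleftrightarrow> v \<in> V \<and> vdeg E s t v = 1"

definition input_edges :: "'v set \<Rightarrow> 'e set \<Rightarrow> ('e \<Rightarrow> 'v) \<Rightarrow> ('e \<Rightarrow> 'v) \<Rightarrow> 'e set" where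
  "input_edges V E s t = {e \<in> E. boundary V E s t (s e)}"

definition output_edges :: "'v set \<Rightarrow> 'e set \<Rightarrow> ('e \<Rightarrow> 'v) \<Rightarrow> ('e \<Rightarrow> 'v) \<Rightarrow> 'e set" where
  "output_edges V E s t = {e \<in> E. boundary V E s t (t e)}"

definition edge_succ :: "'e set \<Rightarrow> ('e \<Rightarrow> 'v) \<Rightarrow> ('e \<Rightarrow> 'v) \<Rightarrow> 'e rel" where
  "edge_succ E s t = {(e, e'). e \<in> E \<and> e' \<in> E \<and> t e = s e'}"

definition arrow :: "'e set \<Rightarrow> ('e \<Rightarrow> 'v) \<Rightarrow> ('e \<Rightarrow> 'v) \<Rightarrow> 'e \<Rightarrow> 'e \<Rightarrow> bool" where
  "arrow E s t e e' \<longleftrightarrow> e \<noteq> e' \<and> (e, e') \<in> (edge_succ E s t)\<^sup>+"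

text \<open>Planar order: a (reflexive) linear order P on E; strict part is x \<prec> y.\<close>
definition planar_order ::
  "'v set \<Rightarrow> 'e set \<Rightarrow> ('e \<Rightarrow> 'v) \<Rightarrow> ('e \<Rightarrow> 'v) \<Rightarrow> 'e rel \<Rightarrow> bool" where
  "planar_order V E s t P \<longleftrightarrow>
     linear_order_on E P \<and>
     (\<forall>e1\<in>E. \<forall>e2\<in>E. arrow E s t e1 e2 \<longrightarrow> (e1, e2) \<in> P \<and> e1 \<noteq> e2) \<and>
     (\<forall>e1\<in>E. \<forall>e2\<in>E. \<forall>e3\<in>E.
        (e1, e2) \<in> P \<and> e1 \<noteq> e2 \<and> (e2, e3) \<in> P \<and> e2 \<noteq> e3 \<and> arrow E s t e1 e3
        \<longrightarrow> arrow E s t e1 e2 \<or> arrow E s t e2 e3)"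

definition pop_graph ::
  "'v set \<Rightarrow> 'e set \<Rightarrow> ('e \<Rightarrow> 'v) \<Rightarrow> ('e \<Rightarrow> 'v) \<Rightarrow> 'e rel \<Rightarrow> bool" where
  "pop_graph V E s t P \<longleftrightarrow> progressive_graph V E s t \<and> planar_order V E s t P"

definition ord_min :: "'e rel \<Rightarrow> 'e set \<Rightarrow> 'e" where
  "ord_min P S = (THE x. x \<in> S \<and> (\<forall>y\<in>S. (x, y) \<in> P))"

definition ord_max :: "'e rel \<Rightarrow> 'e set \<Rightarrow> 'e" where
  "ord_max P S = (THE x. x \<in> S \<and> (\<forall>y\<in>S. (y, x) \<in> P))"

definition i_minus where
  "i_minus V E s t P e = ord_min P {i \<in> input_edges V E s t. arrow E s t i e}"
definition i_plus where
  "i_plus V E s t P e = ord_max P {i \<in> input_edges V E s t. arrow E s t i e}"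
definition o_minus where
  "o_minus V E s t P e = ord_min P {ou \<in> output_edges V E s t. arrow E s t e ou}"
definition o_plus where
  "o_plus V E s t P e = ord_max P {ou \<in> output_edges V E s t. arrow E s t e ou}"

end

theory Submission
  imports Defs
begin

lemma ord_ex_min:
  assumes lo: "linear_order_on E P" and "S \<subseteq> E" "finite S" "S \<noteq> {}"
  shows "\<exists>x\<in>S. \<forall>y\<in>S. (x, y) \<in> P"
  using assms(3,4,2)
proof (induction S rule: finite_ne_induct)
  case (singleton x)
  then show ?case using lo unfolding order_on_defs refl_on_def by auto
next
  case (insert a F)
  then obtain x where x: "x \<in> F" "\<forall>y\<in>F. (x, y) \<in> P" by auto
  have tr: "trans P" and tot: "total_on E P" and rf: "refl_on E P"
    using lo unfolding order_on_defs by auto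
  show ?case
  proof (cases "(a, x) \<in> P")
    case True
    have "\<forall>y\<in>insert a F. (a, y) \<in> P"
      using True x tr rf insert.prems unfolding trans_def refl_on_def by blast
    then show ?thesis by blast
  next
    case False
    then have "a \<noteq> x" using rf insert.prems unfolding refl_on_def by auto
    then have "(x, a) \<in> P" using False tot insert.prems x(1) unfolding total_on_def by blast
    then show ?thesis using x by blast
  qed
qed

lemma ord_min_prop:
  assumes lo: "linear_order_on E P" and "S \<subseteq> E" "finite S" "S \<noteq> {}"
  shows "ord_min P S \<in> S \<and> (\<forall>y\<in>S. (ord_min P S, y) \<in> P)"
proof -
  obtain x where x: "x \<in> S" "\<forall>y\<in>S. (x, y) \<in> P" using ord_ex_min[OF assms] by blast
  have as: "antisym P" using lo unfolding order_on_defs by auto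
  have "ord_min P S = x" unfolding ord_min_def
    apply (rule the_equality)
    using x as unfolding antisym_def by blast+
  then show ?thesis using x by simp
qed

lemma ord_max_prop:
  assumes lo: "linear_order_on E P" and "S \<subseteq> E" "finite S" "S \<noteq> {}"
  shows "ord_max P S \<in> S \<and> (\<forall>y\<in>S. (y, ord_max P S) \<in> P)"
proof -
  have lo': "linear_order_on E (P\<inverse>)" using lo by simp
  obtain x where x: "x \<in> S" "\<forall>y\<in>S. (x, y) \<in> P\<inverse>" using ord_ex_min[OF lo' assms(2-4)] by blast
  have as: "antisym P" using lo unfolding order_on_defs by auto
  have "ord_max P S = x" unfolding ord_max_def
    apply (rule the_equality)
    using x as unfolding antisym_def by blast+
  then show ?thesis using x by simp
qed

lemma input_no_pred:
  assumes pg: "progressive_graph V E s t" and i: "i \<in> input_edges V E s t"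
  shows "\<not> (\<exists>f\<in>E. t f = s i)"
proof
  assume "\<exists>f\<in>E. t f = s i"
  then obtain f where f: "f \<in> E" "t f = s i" by blast
  have fin: "finite E" using pg unfolding progressive_graph_def by auto
  have "vdeg E s t (s i) = 1" using i unfolding input_edges_def boundary_def by auto
  moreover have "outdeg E s (s i) \<ge> 1"
    unfolding outdeg_def using i fin
    by (metis (mono_tags, lifting) One_nat_def Suc_leI card_gt_0_iff empty_iff finite_subset input_edges_def mem_Collect_eq subsetI)
  moreover have "indeg E t (s i) \<ge> 1"
    unfolding indeg_def using f fin
    by (metis (mono_tags, lifting) One_nat_def Suc_leI card_gt_0_iff empty_iff finite_subset mem_Collect_eq subsetI)
  ultimately show False unfolding vdeg_def by simp
qed

lemma output_no_succ:
  assumes pg: "progressive_graph V E s t" and i: "i \<in> output_edges V E s t"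
  shows "\<not> (\<exists>f\<in>E. s f = t i)"
proof
  assume "\<exists>f\<in>E. s f = t i"
  then obtain f where f: "f \<in> E" "s f = t i" by blast
  have fin: "finite E" using pg unfolding progressive_graph_def by auto
  have "vdeg E s t (t i) = 1" using i unfolding output_edges_def boundary_def by auto
  moreover have "indeg E t (t i) \<ge> 1"
    unfolding indeg_def using i fin
    by (metis (mono_tags, lifting) One_nat_def Suc_leI card_gt_0_iff empty_iff finite_subset output_edges_def mem_Collect_eq subsetI)
  moreover have "outdeg E s (t i) \<ge> 1"
    unfolding outdeg_def using f fin
    by (metis (mono_tags, lifting) One_nat_def Suc_leI card_gt_0_iff empty_iff finite_subset mem_Collect_eq subsetI)
  ultimately show False unfolding vdeg_def by simp
qed

lemma no_arrow_to_input:
  assumes pg: "progressive_graph V E s t" and i: "i \<in> input_edges V E s t"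
  shows "\<not> arrow E s t x i"
proof
  assume "arrow E s t x i"
  then have "(x, i) \<in> (edge_succ E s t)\<^sup>+" unfolding arrow_def by auto
  then obtain c where "(c, i) \<in> edge_succ E s t" by (meson tranclE)
  then have "c \<in> E" "t c = s i" unfolding edge_succ_def by auto
  then show False using input_no_pred[OF pg i] by blast
qed

lemma no_arrow_from_output:
  assumes pg: "progressive_graph V E s t" and i: "i \<in> output_edges V E s t"
  shows "\<not> arrow E s t i x"
proof
  assume "arrow E s t i x"
  then have "(i, x) \<in> (edge_succ E s t)\<^sup>+" unfolding arrow_def by auto
  then obtain c where "(i, c) \<in> edge_succ E s t" by (meson converse_tranclE)
  then have "c \<in> E" "s c = t i" unfolding edge_succ_def by auto
  then show False using output_no_succ[OF pg i] by blast
qed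

lemma exists_pred:
  assumes pg: "progressive_graph V E s t" and f: "f \<in> E" "f \<notin> input_edges V E s t"
  shows "\<exists>g\<in>E. t g = s f"
proof (rule ccontr)
  assume n: "\<not> (\<exists>g\<in>E. t g = s f)"
  have fin: "finite E" using pg unfolding progressive_graph_def by auto
  have V: "s f \<in> V" using pg f unfolding progressive_graph_def by auto
  have "indeg E t (s f) = 0" unfolding indeg_def using n by (metis (mono_tags, lifting) card.empty empty_Collect_eq)
  then have "vdeg E s t (s f) = 1" using pg V unfolding progressive_graph_def by auto
  then have "f \<in> input_edges V E s t" using f V unfolding input_edges_def boundary_def by auto
  then show False using f by simp
qed

lemma exists_succ:
  assumes pg: "progressive_graph V E s t" and f: "f \<in> E" "f \<notin> output_edges V E s t"
  shows "\<exists>g\<in>E. s g = t f"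
proof (rule ccontr)
  assume n: "\<not> (\<exists>g\<in>E. s g = t f)"
  have V: "t f \<in> V" using pg f unfolding progressive_graph_def by auto
  have "outdeg E s (t f) = 0" unfolding outdeg_def using n by (metis (mono_tags, lifting) card.empty empty_Collect_eq)
  then have "vdeg E s t (t f) = 1" using pg V unfolding progressive_graph_def by auto
  then have "f \<in> output_edges V E s t" using f V unfolding output_edges_def boundary_def by auto
  then show False using f by simp
qed

lemma nonempty_in:
  assumes pg: "progressive_graph V E s t" and e: "e \<in> E" "e \<notin> input_edges V E s t"
  shows "\<exists>i\<in>input_edges V E s t. arrow E s t i e"
proof (rule ccontr)
  assume na: "\<not> ?thesis"
  define R where "R = {(s e, t e) | e. e \<in> E}"
  have fin: "finite E" using pg unfolding progressive_graph_def by auto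
  have "R = (\<lambda>e. (s e, t e)) ` E" unfolding R_def by auto
  then have fR: "finite R" using fin by simp
  have "acyclic R" using pg unfolding progressive_graph_def R_def by auto
  then have wfR: "wf R" using fR finite_acyclic_wf by blast
  define B where "B = {f \<in> E. (f, e) \<in> (edge_succ E s t)\<^sup>*}"
  have eB: "e \<in> B" using e unfolding B_def by auto
  have step: "\<exists>g\<in>B. (s g, s f) \<in> R" if fB: "f \<in> B" for f
  proof -
    have fE: "f \<in> E" and fr: "(f, e) \<in> (edge_succ E s t)\<^sup>*" using fB unfolding B_def by auto
    have fni: "f \<notin> input_edges V E s t"
    proof (cases "f = e")
      case True then show ?thesis using e by simp
    next
      case False
      then have "(f, e) \<in> (edge_succ E s t)\<^sup>+" using fr by (metis rtranclD)
      then have "arrow E s t f e" using False unfolding arrow_def by simp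
      then show ?thesis using na by blast
    qed
    obtain g where g: "g \<in> E" "t g = s f" using exists_pred[OF pg fE fni] by blast
    have "(g, f) \<in> edge_succ E s t" using g fE unfolding edge_succ_def by auto
    then have "(g, e) \<in> (edge_succ E s t)\<^sup>*" using fr by simp
    then have "g \<in> B" using g unfolding B_def by auto
    moreover have "(s g, s f) \<in> R" using g unfolding R_def by (metis (mono_tags, lifting) mem_Collect_eq)
    ultimately show ?thesis by blast
  qed
  have "s e \<in> s ` B" using eB by simp
  then obtain z where z: "z \<in> s ` B" "\<forall>y. (y, z) \<in> R \<longrightarrow> y \<notin> s ` B"
    using wfR by (metis wf_eq_minimal)
  then obtain f where "f \<in> B" "z = s f" by blast
  then show False using step z by blast
qed

lemma nonempty_out:
  assumes pg: "progressive_graph V E s t" and e: "e \<in> E" "e \<notin> output_edges V E s t"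
  shows "\<exists>i\<in>output_edges V E s t. arrow E s t e i"
proof (rule ccontr)
  assume na: "\<not> ?thesis"
  define R where "R = {(s e, t e) | e. e \<in> E}"
  have fin: "finite E" using pg unfolding progressive_graph_def by auto
  have "R = (\<lambda>e. (s e, t e)) ` E" unfolding R_def by auto
  then have fR: "finite R" using fin by simp
  have "acyclic R" using pg unfolding progressive_graph_def R_def by auto
  then have wfR: "wf (R\<inverse>)" using fR finite_acyclic_wf_converse by blast
  define B where "B = {f \<in> E. (e, f) \<in> (edge_succ E s t)\<^sup>*}"
  have eB: "e \<in> B" using e unfolding B_def by auto
  have step: "\<exists>g\<in>B. (t g, t f) \<in> R\<inverse>" if fB: "f \<in> B" for f
  proof -
    have fE: "f \<in> E" and fr: "(e, f) \<in> (edge_succ E s t)\<^sup>*" using fB unfolding B_def by auto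
    have fni: "f \<notin> output_edges V E s t"
    proof (cases "f = e")
      case True then show ?thesis using e by simp
    next
      case False
      then have "(e, f) \<in> (edge_succ E s t)\<^sup>+" using fr by (metis rtranclD)
      then have "arrow E s t e f" using False unfolding arrow_def by simp
      then show ?thesis using na by blast
    qed
    obtain g where g: "g \<in> E" "s g = t f" using exists_succ[OF pg fE fni] by blast
    have "(f, g) \<in> edge_succ E s t" using g fE unfolding edge_succ_def by auto
    then have "(e, g) \<in> (edge_succ E s t)\<^sup>*" using fr by simp
    then have "g \<in> B" using g unfolding B_def by auto
    moreover have "(t f, t g) \<in> R" using g unfolding R_def by (metis (mono_tags, lifting) mem_Collect_eq)
    ultimately show ?thesis by blast
  qed
  have "t e \<in> t ` B" using eB by simp
  then obtain z where z: "z \<in> t ` B" "\<forall>y. (y, z) \<in> R\<inverse> \<longrightarrow> y \<notin> t ` B"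
    using wfR by (metis wf_eq_minimal)
  then obtain f where "f \<in> B" "z = t f" by blast
  then show False using step z by blast
qed

theorem lemma3p2:
  fixes V :: "'v set" and E :: "'e set" and s t :: "'e \<Rightarrow> 'v" and P :: "'e rel"
  assumes "pop_graph V E s t P"
  shows "(\<forall>i\<in>input_edges V E s t. \<forall>e\<in>E - input_edges V E s t.
            ((i_minus V E s t P e, i) \<in> P \<and> (i, i_plus V E s t P e) \<in> P)
              \<longleftrightarrow> arrow E s t i e)
       \<and> (\<forall>ou\<in>output_edges V E s t. \<forall>e\<in>E - output_edges V E s t.
            ((o_minus V E s t P e, ou) \<in> P \<and> (ou, o_plus V E s t P e) \<in> P)
              \<longleftrightarrow> arrow E s t e ou)"
proof -
  have pg: "progressive_graph V E s t" and po: "planar_order V E s t P"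
    using assms unfolding pop_graph_def by auto
  have lo: "linear_order_on E P" and P1: "\<forall>e1\<in>E. \<forall>e2\<in>E. arrow E s t e1 e2 \<longrightarrow> (e1, e2) \<in> P \<and> e1 \<noteq> e2"
   and P2: "\<forall>e1\<in>E. \<forall>e2\<in>E. \<forall>e3\<in>E.
        (e1, e2) \<in> P \<and> e1 \<noteq> e2 \<and> (e2, e3) \<in> P \<and> e2 \<noteq> e3 \<and> arrow E s t e1 e3
        \<longrightarrow> arrow E s t e1 e2 \<or> arrow E s t e2 e3"
    using po unfolding planar_order_def by auto
  have fin: "finite E" using pg unfolding progressive_graph_def by auto
  have tr: "trans P" and as: "antisym P" using lo unfolding order_on_defs by auto
  have IE: "input_edges V E s t \<subseteq> E" "output_edges V E s t \<subseteq> E"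
    unfolding input_edges_def output_edges_def by auto
  show ?thesis
  proof (intro conjI ballI)
    fix i e assume i: "i \<in> input_edges V E s t" and e: "e \<in> E - input_edges V E s t"
    define S where "S = {i \<in> input_edges V E s t. arrow E s t i e}"
    have SE: "S \<subseteq> E" using IE unfolding S_def by auto
    have fS: "finite S" using SE fin finite_subset by blast
    have neS: "S \<noteq> {}" using nonempty_in[OF pg] e unfolding S_def by auto
    have mn: "i_minus V E s t P e \<in> S \<and> (\<forall>y\<in>S. (i_minus V E s t P e, y) \<in> P)"
      using ord_min_prop[OF lo SE fS neS] unfolding i_minus_def S_def by simp
    have mx: "i_plus V E s t P e \<in> S \<and> (\<forall>y\<in>S. (y, i_plus V E s t P e) \<in> P)"
      using ord_max_prop[OF lo SE fS neS] unfolding i_plus_def S_def by simp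
    have iE: "i \<in> E" and eE: "e \<in> E" using i e IE by auto
    show "((i_minus V E s t P e, i) \<in> P \<and> (i, i_plus V E s t P e) \<in> P) \<longleftrightarrow> arrow E s t i e"
    proof
      assume "arrow E s t i e"
      then have "i \<in> S" using i unfolding S_def by auto
      then show "(i_minus V E s t P e, i) \<in> P \<and> (i, i_plus V E s t P e) \<in> P" using mn mx by blast
    next
      assume h: "(i_minus V E s t P e, i) \<in> P \<and> (i, i_plus V E s t P e) \<in> P"
      let ?a = "i_minus V E s t P e" and ?b = "i_plus V E s t P e"
      show "arrow E s t i e"
      proof (cases "i = ?a \<or> i = ?b")
        case True then show ?thesis using mn mx unfolding S_def by auto
      next
        case False
        have aE: "?a \<in> E" "?b \<in> E" using mn mx SE by auto
        have "(?b, e) \<in> P \<and> ?b \<noteq> e" using P1 mx aE eE unfolding S_def by auto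
        then have ie: "(i, e) \<in> P" using h tr unfolding trans_def by blast
        have "i \<noteq> e" using i e by auto
        then have "arrow E s t ?a i \<or> arrow E s t i e"
          using P2 aE iE eE h False ie mn unfolding S_def by blast
        moreover have "\<not> arrow E s t ?a i" using no_arrow_to_input[OF pg i] by blast
        ultimately show ?thesis by blast
      qed
    qed
  next
    fix i e assume i: "i \<in> output_edges V E s t" and e: "e \<in> E - output_edges V E s t"
    define S where "S = {ou \<in> output_edges V E s t. arrow E s t e ou}"
    have SE: "S \<subseteq> E" using IE unfolding S_def by auto
    have fS: "finite S" using SE fin finite_subset by blast
    have neS: "S \<noteq> {}" using nonempty_out[OF pg] e unfolding S_def by auto
    have mn: "o_minus V E s t P e \<in> S \<and> (\<forall>y\<in>S. (o_minus V E s t P e, y) \<in> P)"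
      using ord_min_prop[OF lo SE fS neS] unfolding o_minus_def S_def by simp
    have mx: "o_plus V E s t P e \<in> S \<and> (\<forall>y\<in>S. (y, o_plus V E s t P e) \<in> P)"
      using ord_max_prop[OF lo SE fS neS] unfolding o_plus_def S_def by simp
    have iE: "i \<in> E" and eE: "e \<in> E" using i e IE by auto
    show "((o_minus V E s t P e, i) \<in> P \<and> (i, o_plus V E s t P e) \<in> P) \<longleftrightarrow> arrow E s t e i"
    proof
      assume "arrow E s t e i"
      then have "i \<in> S" using i unfolding S_def by auto
      then show "(o_minus V E s t P e, i) \<in> P \<and> (i, o_plus V E s t P e) \<in> P" using mn mx by blast
    next
      assume h: "(o_minus V E s t P e, i) \<in> P \<and> (i, o_plus V E s t P e) \<in> P"
      let ?a = "o_minus V E s t P e" and ?b = "o_plus V E s t P e"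
      show "arrow E s t e i"
      proof (cases "i = ?a \<or> i = ?b")
        case True then show ?thesis using mn mx unfolding S_def by auto
      next
        case False
        have aE: "?a \<in> E" "?b \<in> E" using mn mx SE by auto
        have "(e, ?a) \<in> P \<and> e \<noteq> ?a" using P1 mn aE eE unfolding S_def by auto
        then have ie: "(e, i) \<in> P" using h tr unfolding trans_def by blast
        have "i \<noteq> e" using i e by auto
        then have "arrow E s t e i \<or> arrow E s t i ?b"
          using P2 aE iE eE h False ie mx unfolding S_def by blast
        moreover have "\<not> arrow E s t i ?b" using no_arrow_from_output[OF pg i] by blast
        ultimately show ?thesis by blast
      qed
    qed
  qed
qed

end
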